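(* Let $k\ge1$, let $(S_i)_{i\in\mathbb{N}}$ be a sequence of subsets of $[0,1]^k$, and let $(\delta_i)_{i\in\mathbb{N}}$ be positive reals with $\delta_i\to0$. For $\delta>0$ put $\Delta(S_i,\delta)=\{\mathbf{x}\in[0,1]^k:\operatorname{dist}(S_i,\mathbf{x})<\delta\}$. Then for every real $C>1$ the sets $\limsup_{i\to\infty}\Delta(S_i,\delta_i)$ and $\limsup_{i\to\infty}\Delta(S_i,C\delta_i)$ have the same Lebesgue measure.
   Context: For sets $E_i$, $\limsup_{i\to\infty}E_i=\bigcap_{j\ge1}\bigcup_{i\ge j}E_i$. $\operatorname{dist}$ is the Euclidean distance from a point to a set. *)

theory Defs
  imports "HOL-Analysis.Analysis"
begin

text \<open>The unit cube [0,1]^k inside the k-dimensional space real^'n (k = CARD('n)).\<close>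
definition unit_cube :: "(real^'n) set" where
  "unit_cube = cbox 0 1"

text \<open>Delta(S, delta): points of the cube at Euclidean distance < delta from S.
  The distance from a point to the empty set is taken as +infinity, so Delta({}, delta) = {}.\<close>
definition Delta :: "(real^'n) set \<Rightarrow> real \<Rightarrow> (real^'n) set" where
  "Delta S \<delta> = {x \<in> unit_cube. S \<noteq> {} \<and> infdist x S < \<delta>}"

definition limsup_set :: "(nat \<Rightarrow> 'a set) \<Rightarrow> 'a set" where
  "limsup_set E = (\<Inter>j. \<Union>i\<in>{j..}. E i)"

end

theory Submission
  imports Defs "HOL-Analysis.Analysis"
begin

lemma density_null:
  fixes N A :: "'a::euclidean_space set" and c::real
  assumes N: "N \<in> lmeasurable" and A: "A \<in> sets lebesgue" and disj: "N \<inter> A = {}"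
    and c: "0<c" "c<1"
    and dens: "\<And>x d. x \<in> N \<Longrightarrow> d>0 \<Longrightarrow> \<exists>r. 0<r \<and> r<d \<and>
        c * measure lebesgue (ball x r) \<le> measure lebesgue (ball x r \<inter> A)"
  shows "negligible N"
proof (rule ccontr)
  assume nn: "\<not> negligible N"
  define m where "m = measure lebesgue N"
  have m0: "m > 0" using nn N negligible_iff_measure0 m_def
    by (metis measure_nonneg order_less_le)
  obtain G where G: "open G" "N \<subseteq> G" "G - N \<in> lmeasurable"
     "emeasure lebesgue (G - N) < ennreal (c*m)"
    using sets_lebesgue_outer_open[of N "c*m"] N m0 c by auto
  have GU: "G = N \<union> (G - N)" using G by auto
  have Gl: "G \<in> lmeasurable" using GU N G(3) by (metis fmeasurable.Un)
  have "measure lebesgue (G - N) < c*m"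
    using G(4) G(3) by (simp add: emeasure_eq_measure2 ennreal_less_iff)
  then have mG: "measure lebesgue G < m + c*m"
  proof -
    have "measure lebesgue G = m + measure lebesgue (G - N)"
      using measure_Un2[OF N Gl] GU m_def by simp
    then show ?thesis using \<open>measure lebesgue (G - N) < c*m\<close> by simp
  qed
  define K where "K = {(x,r). x\<in>N \<and> 0<r \<and> ball x r \<subseteq> G \<and>
        c * measure lebesgue (ball x r) \<le> measure lebesgue (ball x r \<inter> A)}"
  have cov: "\<exists>i. i \<in> K \<and> x \<in> ball (fst i) (snd i) \<and> snd i < d" if xN: "x \<in> N" and d0: "0 < d" for x d
  proof -
    have xG: "x \<in> G" using G(2) xN by blast
    obtain e where e: "e>0" "ball x e \<subseteq> G" using openE[OF G(1) xG] by blast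
    have md: "min d e > 0" using e(1) d0 by simp
    obtain r where r: "0<r" "r < min d e"
        "c * measure lebesgue (ball x r) \<le> measure lebesgue (ball x r \<inter> A)"
      using dens[OF xN md] by blast
    have "ball x r \<subseteq> ball x e" using r(2) by (intro subset_ball) simp
    then have "ball x r \<subseteq> G" using e(2) by blast
    then have "(x,r) \<in> K" unfolding K_def using r(1,3) xN by simp
    moreover have "x \<in> ball (fst (x,r)) (snd (x,r))" using r(1) by simp
    moreover have "snd (x,r) < d" using r(2) by simp
    ultimately show ?thesis by blast
  qed
  obtain CC where CC: "countable CC" "CC \<subseteq> K"
     "pairwise (\<lambda>i j. disjnt (ball (fst i) (snd i)) (ball (fst j) (snd j))) CC"
     "negligible(N - (\<Union>i \<in> CC. ball (fst i) (snd i)))"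
    using Vitali_covering_theorem_balls[of N K fst snd, OF cov] by blast
  define B where "B i = ball (fst i) (snd i)" for i :: "'a \<times> real"
  define D where "D = (\<Union>i \<in> CC. B i)"
  have Kb: "ball (fst i) (snd i) \<subseteq> G \<and> c * measure lebesgue (ball (fst i) (snd i)) \<le> measure lebesgue (ball (fst i) (snd i) \<inter> A)"
    if "i \<in> K" for i using that by (cases i) (simp add: K_def)
  have BG: "B i \<subseteq> G" if "i \<in> CC" for i using that CC(2) Kb unfolding B_def by blast
  have DG: "D \<subseteq> G" unfolding D_def using BG by blast
  have "open D" unfolding D_def B_def by (intro open_UN) simp
  then have Dl: "D \<in> sets lebesgue" by simp
  have Bl: "B i \<in> lmeasurable" for i unfolding B_def by simp
  have BAl: "B i \<inter> A \<in> lmeasurable" for i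
    using Bl A by (meson fmeasurableI2 inf_le1 sets.Int fmeasurableD)
  have Bc: "c * measure lebesgue (B i) \<le> measure lebesgue (B i \<inter> A)" if "i \<in> CC" for i
    using that CC(2) Kb unfolding B_def by blast
  have e1: "emeasure lebesgue N \<le> emeasure lebesgue (D - A)"
  proof -
    have "N \<subseteq> (D - A) \<union> (N - D)" using disj by auto
    then have "emeasure lebesgue N \<le> emeasure lebesgue ((D - A) \<union> (N - D))"
      by (intro emeasure_mono) (use Dl A N in auto)
    also have "\<dots> = emeasure lebesgue (D - A)"
      using CC(4) Dl A by (intro emeasure_Un_null_set) (auto simp: negligible_iff_null_sets D_def B_def)
    finally show ?thesis .
  qed
  have disjf: "disjoint_family_on B CC"
    using CC(3) unfolding disjoint_family_on_def pairwise_def disjnt_def B_def by metis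
  have e2: "emeasure lebesgue (D - A) = (\<integral>\<^sup>+i. emeasure lebesgue (B i - A) \<partial>count_space CC)"
  proof -
    have eqDA: "D - A = (\<Union>i\<in>CC. B i - A)" unfolding D_def by auto
    have dj: "disjoint_family_on (\<lambda>i. B i - A) CC"
      using disjf unfolding disjoint_family_on_def by blast
    have ms: "B i - A \<in> sets lebesgue" for i
      using Bl A by (intro sets.Diff) (auto dest: fmeasurableD)
    show ?thesis unfolding eqDA by (rule emeasure_UN_countable[OF ms CC(1) dj])
  qed
  have e3: "emeasure lebesgue (B i - A) \<le> ennreal (1-c) * emeasure lebesgue (B i)" if "i \<in> CC" for i
  proof -
    have "B i - A = B i - (B i \<inter> A)" by auto
    then have "measure lebesgue (B i - A) = measure lebesgue (B i) - measure lebesgue (B i \<inter> A)"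
      using Bl BAl by (simp add: measurable_measure_Diff fmeasurableD)
    also have "\<dots> \<le> (1-c) * measure lebesgue (B i)" using Bc[OF that] by (simp add: algebra_simps)
    finally have "measure lebesgue (B i - A) \<le> (1-c) * measure lebesgue (B i)" .
    moreover have "B i - A \<in> lmeasurable" using Bl A by (meson fmeasurableI2 Diff_subset sets.Diff fmeasurableD)
    ultimately show ?thesis using Bl c
      by (simp add: emeasure_eq_measure2 ennreal_mult[symmetric] ennreal_leI)
  qed
  have Bs: "B i \<in> sets lebesgue" for i using Bl by (rule fmeasurableD)
  have "emeasure lebesgue N \<le> emeasure lebesgue (D - A)" by (rule e1)
  also have "\<dots> = (\<integral>\<^sup>+i. emeasure lebesgue (B i - A) \<partial>count_space CC)" by (rule e2)
  also have "\<dots> \<le> (\<integral>\<^sup>+i. ennreal (1-c) * emeasure lebesgue (B i) \<partial>count_space CC)"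
    using e3 by (intro nn_integral_mono) auto
  also have "\<dots> = ennreal (1-c) * (\<integral>\<^sup>+i. emeasure lebesgue (B i) \<partial>count_space CC)"
    by (rule nn_integral_cmult) auto
  also have "(\<integral>\<^sup>+i. emeasure lebesgue (B i) \<partial>count_space CC) = emeasure lebesgue D"
    unfolding D_def by (rule emeasure_UN_countable[OF Bs CC(1) disjf, symmetric])
  also have "ennreal (1-c) * emeasure lebesgue D \<le> ennreal (1-c) * emeasure lebesgue G"
    using DG Gl by (intro mult_left_mono emeasure_mono) auto
  finally have "emeasure lebesgue N \<le> ennreal (1-c) * emeasure lebesgue G" .
  then have "ennreal m \<le> ennreal ((1-c) * measure lebesgue G)"
    using N Gl c by (simp add: emeasure_eq_measure2 m_def ennreal_mult)
  then have "m \<le> (1-c) * measure lebesgue G"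
    using c by (simp add: ennreal_le_iff)
  also have "\<dots> < (1-c) * (m + c*m)" using mG c by simp
  also have "\<dots> = m - c*c*m" by (simp add: algebra_simps)
  finally have "m < m - c*c*m" .
  moreover have "c*c*m > 0" using c m0 by simp
  ultimately show False by linarith
qed

lemma box_lemma:
  fixes s x :: "real^'n" and T U :: "(real^'n) set" and C \<delta> :: real
  assumes s: "s \<in> unit_cube" "s \<in> T" and d: "0<\<delta>" "\<delta><1" and xs: "dist x s < C*\<delta>" and C: "C>1"
    and TU: "Delta T \<delta> \<subseteq> U" and U: "U \<in> sets lebesgue"
  shows "(1/(4*CARD('n)*(C+1)))^CARD('n) * measure lebesgue (ball x ((C+1)*\<delta>))
     \<le> measure lebesgue (ball x ((C+1)*\<delta>) \<inter> U)"
proof -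
  define k where "k = CARD('n)"
  have k1: "real k \<ge> 1" unfolding k_def by (simp add: Suc_leI)
  define h where "h = \<delta>/(2*k)"
  define R where "R = (C+1)*\<delta>"
  have h0: "0 < h" "h < 1/2" using d k1 unfolding h_def by (auto simp: field_simps)
  define a where "a = (\<chi> i. if s$i \<le> 1/2 then s$i else s$i - h)"
  define b where "b = (\<chi> i. a$i + h)"
  define P where "P = cbox a b"
  have s01: "0 \<le> s$i \<and> s$i \<le> 1" for i using s(1) by (auto simp: unit_cube_def mem_box_cart)
  have Pcube: "P \<subseteq> unit_cube"
  proof
    fix y assume "y \<in> P"
    then have *: "a$i \<le> y$i \<and> y$i \<le> b$i" for i by (auto simp: P_def mem_box_cart)
    show "y \<in> unit_cube" unfolding unit_cube_def mem_box_cart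
    proof
      fix i
      have y1: "a$i \<le> y$i" "y$i \<le> b$i" using * by auto
      have "0 \<le> a$i" "b$i \<le> 1" using s01[of i] h0 by (auto simp: a_def b_def)
      then show "0$i \<le> y$i \<and> y$i \<le> 1$i" using y1 by simp
    qed
  qed
  have Pball: "dist s y < \<delta>" if "y \<in> P" for y
  proof -
    have yi: "\<bar>(s - y)$i\<bar> \<le> h" for i
    proof -
      have "a$i \<le> y$i \<and> y$i \<le> b$i" using that by (auto simp: P_def mem_box_cart)
      moreover have "a$i \<le> s$i" "s$i \<le> b$i" "b$i = a$i + h"
        using s01[of i] h0 by (auto simp: a_def b_def)
      ultimately show ?thesis unfolding vector_minus_component abs_le_iff by linarith
    qed
    have "dist s y = norm (s - y)" by (simp add: dist_norm)
    also have "\<dots> \<le> (\<Sum>i\<in>UNIV. \<bar>(s - y)$i\<bar>)" by (rule norm_le_l1_cart)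
    also have "\<dots> \<le> (\<Sum>i\<in>(UNIV::'n set). h)" by (rule sum_mono) (use yi in auto)
    also have "\<dots> = k * h" by (simp add: k_def)
    also have "\<dots> = \<delta>/2" using k1 unfolding h_def by (simp add: field_simps)
    finally show ?thesis using d by simp
  qed
  have PU: "P \<subseteq> ball x R \<inter> U"
  proof
    fix y assume y: "y \<in> P"
    have "infdist y T \<le> dist y s" using s(2) by (rule infdist_le)
    then have "infdist y T < \<delta>" using Pball[OF y] by (simp add: dist_commute)
    then have "y \<in> Delta T \<delta>" using s(2) y Pcube by (auto simp: Delta_def)
    moreover have "dist x y < R" using dist_triangle[of x y s] Pball[OF y] xs unfolding R_def
      by (simp add: algebra_simps)
    ultimately show "y \<in> ball x R \<inter> U" using TU by auto
  qed
  have ab: "a \<in> cbox a b" using h0 by (simp add: mem_box_cart b_def)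
  have mP: "measure lebesgue P = h ^ k"
  proof -
    have "cbox a b \<noteq> {}" using ab by blast
    then have "measure lborel (cbox a b) = prod (\<lambda>i. b$i - a$i) UNIV" by (rule content_cbox_cart)
    then show ?thesis by (simp add: P_def b_def k_def)
  qed
  define r where "r = (\<chi> i::'n. R)"
  have ballsub: "ball x R \<subseteq> cbox (x - r) (x + r)"
  proof
    fix y assume "y \<in> ball x R"
    then have "norm (x - y) < R" by (simp add: dist_norm)
    then have "\<bar>(x - y)$i\<bar> \<le> R" for i using component_le_norm_cart[of "x-y" i] by simp
    then have "\<bar>x$i - y$i\<bar> \<le> R" for i by simp
    then show "y \<in> cbox (x - r) (x + r)" unfolding mem_box_cart r_def
      by (simp add: abs_le_iff) (metis add.commute diff_le_eq le_diff_eq)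
  qed
  have R0: "R > 0" using C d unfolding R_def by simp
  have mB: "measure lebesgue (ball x R) \<le> (2*R)^k"
  proof -
    have "x \<in> cbox (x - r) (x + r)" using R0 unfolding r_def by (simp add: mem_box_cart)
    then have "cbox (x - r) (x + r) \<noteq> {}" by blast
    then have "measure lborel (cbox (x - r) (x + r)) = prod (\<lambda>i. (x + r)$i - (x - r)$i) UNIV"
      by (rule content_cbox_cart)
    then have "measure lebesgue (cbox (x - r) (x + r)) = (2*R)^k" by (simp add: r_def k_def)
    moreover have "measure lebesgue (ball x R) \<le> measure lebesgue (cbox (x - r) (x + r))"
      using ballsub by (intro measure_mono_fmeasurable) auto
    ultimately show ?thesis by simp
  qed
  have BUl: "ball x R \<inter> U \<in> lmeasurable"
  proof -
    have "ball x R \<in> sets lebesgue" by simp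
    then have "ball x R \<inter> U \<in> sets lebesgue" using U by (rule sets.Int)
    then show ?thesis by (rule fmeasurableI2[OF lmeasurable_ball Int_lower1])
  qed
  have "measure lebesgue P \<le> measure lebesgue (ball x R \<inter> U)"
  proof (rule measure_mono_fmeasurable[OF PU _ BUl])
    show "P \<in> sets lebesgue" unfolding P_def by simp
  qed
  moreover have "(1/(4*k*(C+1)))^k * (2*R)^k = h^k"
  proof -
    have "C + 1 \<noteq> 0" "real k \<noteq> 0" using C k1 by auto
    then have "1/(4*k*(C+1)) * (2*R) = h" unfolding h_def R_def by (simp add: divide_simps)
    then show ?thesis by (simp only: power_mult_distrib[symmetric])
  qed
  moreover have "(1/(4*k*(C+1)))^k * measure lebesgue (ball x R) \<le> (1/(4*k*(C+1)))^k * (2*R)^k"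
    using mB C by (intro mult_left_mono) auto
  ultimately show ?thesis using mP unfolding k_def R_def by linarith
qed

theorem lemma4:
  fixes S :: "nat \<Rightarrow> (real^'n) set" and \<delta> :: "nat \<Rightarrow> real" and C :: real
  assumes "\<And>i. S i \<subseteq> unit_cube"
    and "\<And>i. \<delta> i > 0"
    and "\<delta> \<longlonglongrightarrow> 0"
    and "C > 1"
  shows "emeasure lebesgue (limsup_set (\<lambda>i. Delta (S i) (\<delta> i)))
       = emeasure lebesgue (limsup_set (\<lambda>i. Delta (S i) (C * \<delta> i)))"
proof -
  note SU = assms(1) and dpos = assms(2) and dlim = assms(3) and C1 = assms(4)
  define k where "k = CARD('n)"
  have k1: "real k \<ge> 1" unfolding k_def by (simp add: Suc_leI)
  define c0 where "c0 = (1/(4*k*(C+1)))^k"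
  have c0: "0 < c0" "c0 < 1"
  proof -
    have "real (4*k) \<ge> 4" using k1 by simp
    then have "real (4*k) * (C+1) \<ge> 4 * (C+1)" using C1 by (intro mult_right_mono) auto
    then have pos: "real (4*k) * (C+1) > 1" using C1 by simp
    have gen: "\<And>y::real. y > 1 \<Longrightarrow> 0 < 1/y \<and> 1/y < 1" by simp
    have q: "0 < 1/(4*k*(C+1))" "1/(4*k*(C+1)) < 1" using gen[OF pos] by auto
    show "0 < c0" unfolding c0_def using q by simp
    have "k \<noteq> 0" using k1 by auto
    then show "c0 < 1" unfolding c0_def using q by (simp add: power_less_one_iff)
  qed
  define E where "E i = Delta (S i) (\<delta> i)" for i
  define F where "F i = Delta (S i) (C * \<delta> i)" for i
  define Aj where "Aj j = (\<Union>i\<in>{j..}. E i)" for j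
  have cube_sets: "unit_cube \<in> sets lebesgue" unfolding unit_cube_def by simp
  have Delta_sets: "Delta T d \<in> sets lebesgue" for T :: "(real^'n) set" and d
  proof -
    have eq: "Delta T d = unit_cube \<inter> {x. T \<noteq> {} \<and> infdist x T < d}" by (auto simp: Delta_def)
    have "open {x. T \<noteq> {} \<and> infdist x T < d}"
    proof (cases "T = {}")
      case True then show ?thesis by simp
    next
      case False
      have "open {x. infdist x T < d}"
        by (intro open_Collect_less continuous_intros)
      then show ?thesis using False by simp
    qed
    then have "{x. T \<noteq> {} \<and> infdist x T < d} \<in> sets lebesgue" by simp
    then show ?thesis unfolding eq using cube_sets by (intro sets.Int)
  qed
  have Delta_sub: "Delta T d \<subseteq> unit_cube" for T :: "(real^'n) set" and d by (auto simp: Delta_def)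
  have Aj_sets: "Aj j \<in> sets lebesgue" for j
    unfolding Aj_def E_def by (intro sets.countable_UN'' Delta_sets) auto
  have LS_sets: "limsup_set (\<lambda>i. Delta (S i) (t i)) \<in> sets lebesgue" for t
  proof -
    have "(\<Union>i\<in>{j..}. Delta (S i) (t i)) \<in> sets lebesgue" for j
      by (intro sets.countable_UN'' Delta_sets) auto
    then show ?thesis unfolding limsup_set_def by (intro sets.countable_INT) auto
  qed
  have LF_sub: "limsup_set F \<subseteq> unit_cube"
    unfolding limsup_set_def F_def using Delta_sub by blast
  have EF: "E i \<subseteq> F i" for i
  proof
    fix x assume "x \<in> E i"
    moreover have "\<delta> i < C * \<delta> i" using dpos[of i] C1 by simp
    ultimately show "x \<in> F i" unfolding E_def F_def Delta_def by auto
  qed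
  have LEF: "limsup_set E \<subseteq> limsup_set F"
    unfolding limsup_set_def using EF by blast
  have neg: "negligible (limsup_set F - Aj j)" for j
  proof (rule density_null[OF _ Aj_sets _ c0])
    show "limsup_set F - Aj j \<in> lmeasurable"
    proof (rule bounded_set_imp_lmeasurable)
      show "bounded (limsup_set F - Aj j)"
        using LF_sub unfolding unit_cube_def by (meson Diff_subset bounded_cbox bounded_subset subset_trans)
      show "limsup_set F - Aj j \<in> sets lebesgue"
        using LS_sets[of "\<lambda>i. C * \<delta> i"] Aj_sets[of j] unfolding F_def by (intro sets.Diff)
    qed
    show "(limsup_set F - Aj j) \<inter> Aj j = {}" by blast
    fix x d assume xN: "x \<in> limsup_set F - Aj j" and d0: "0 < (d::real)"
    define d' where "d' = min (d/(C+1)) 1"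
    have d'0: "d' > 0" using d0 C1 unfolding d'_def by simp
    have "eventually (\<lambda>i. \<delta> i < d') sequentially"
      using order_tendstoD(2)[OF dlim d'0] .
    then obtain M where M: "\<And>i. i \<ge> M \<Longrightarrow> \<delta> i < d'" unfolding eventually_sequentially by blast
    have "x \<in> (\<Union>i\<in>{max j M..}. F i)" using xN unfolding limsup_set_def by blast
    then obtain i where i: "i \<ge> max j M" "x \<in> F i" by auto
    have Sne: "S i \<noteq> {}" and infx: "infdist x (S i) < C * \<delta> i"
      using i(2) unfolding F_def Delta_def by auto
    then have "(INF a\<in>S i. dist x a) < C * \<delta> i" by (simp add: infdist_notempty)
    then obtain s where s: "s \<in> S i" "dist x s < C * \<delta> i"
      using Sne by (subst (asm) cINF_less_iff) auto
    have di: "\<delta> i < d'" using M i(1) by simp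
    have d1: "\<delta> i < 1" using di unfolding d'_def by simp
    have rd: "(C+1) * \<delta> i < d"
    proof -
      have "\<delta> i < d/(C+1)" using di unfolding d'_def by simp
      then show ?thesis using C1 by (simp add: field_simps)
    qed
    have EA: "Delta (S i) (\<delta> i) \<subseteq> Aj j" unfolding Aj_def E_def using i(1) by auto
    have "c0 * measure lebesgue (ball x ((C+1)*\<delta> i)) \<le> measure lebesgue (ball x ((C+1)*\<delta> i) \<inter> Aj j)"
      unfolding c0_def k_def
      by (rule box_lemma[OF _ s(1) dpos d1 s(2) C1 EA Aj_sets]) (use SU s(1) in blast)
    moreover have "0 < (C+1) * \<delta> i" using C1 dpos[of i] by simp
    ultimately show "\<exists>r. 0 < r \<and> r < d \<and> c0 * measure lebesgue (ball x r) \<le> measure lebesgue (ball x r \<inter> Aj j)"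
      using rd by blast
  qed
  have "limsup_set F - limsup_set E \<subseteq> (\<Union>j. limsup_set F - Aj j)"
    unfolding limsup_set_def Aj_def by blast
  moreover have "negligible (\<Union>j. limsup_set F - Aj j)"
    using neg by (rule negligible_Union_nat)
  ultimately have negD: "negligible (limsup_set F - limsup_set E)" by (rule negligible_subset[rotated])
  have eqF: "limsup_set F = limsup_set E \<union> (limsup_set F - limsup_set E)" using LEF by blast
  have LEs: "limsup_set E \<in> sets lebesgue" unfolding E_def by (rule LS_sets)
  have nD: "limsup_set F - limsup_set E \<in> null_sets lebesgue"
    using negD by (simp add: negligible_iff_null_sets)
  have "emeasure lebesgue (limsup_set F) = emeasure lebesgue (limsup_set E \<union> (limsup_set F - limsup_set E))"
    by (rule arg_cong[OF eqF])
  also have "\<dots> = emeasure lebesgue (limsup_set E)"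
    by (rule emeasure_Un_null_set[OF LEs nD])
  finally have "emeasure lebesgue (limsup_set F) = emeasure lebesgue (limsup_set E)" .
  then show ?thesis unfolding E_def F_def by simp
qed

end
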